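(* Let $N$ be a finite set with $|N|\ge 3$. Then for every $a\in N$ the inequality $\sum_{B:\,\emptyset\neq B\subseteq N\setminus\{a\}}\eta(a|B)\le 1$ defines a facet of $P_N$.
   Context: $\mathrm{DAG}(N)$ is the set of acyclic directed graphs over $N$; $\mathrm{pa}_G(a)$ is the parent set of $a$ in $G$. $\Upsilon=\{(a|B): a\in N,\ \emptyset\neq B\subseteq N\setminus\{a\}\}$; $\eta_G\in\mathbb{R}^{\Upsilon}$ has $\eta_G(a|B)=1$ if $B=\mathrm{pa}_G(a)$, else $0$; $P_N=\mathrm{conv}\{\eta_G:G\in\mathrm{DAG}(N)\}$ is the family-variable polytope. *)

theory Defs
  imports "HOL-Analysis.Analysis"
begin

text \<open>Directed graphs over a vertex set N are edge relations G with G \<subseteq> N \<times> N;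
  (b,a) \<in> G means an arrow b \<rightarrow> a.\<close>

definition DAG :: "'a set \<Rightarrow> ('a \<times> 'a) set set" where
  "DAG N = {G. G \<subseteq> N \<times> N \<and> acyclic G}"

definition pa :: "('a \<times> 'a) set \<Rightarrow> 'a \<Rightarrow> 'a set" where
  "pa G a = {b. (b, a) \<in> G}"

definition Upsilon :: "'a set \<Rightarrow> ('a \<times> 'a set) set" where
  "Upsilon N = {(a, B). a \<in> N \<and> B \<noteq> {} \<and> B \<subseteq> N - {a}}"

text \<open>R^Upsilon is embedded in real ^ ('a \<times> 'a set); coordinates outside Upsilon
  are identically 0 on all points considered, so faces/dimensions are unaffected.\<close>
definition eta :: "'a::finite set \<Rightarrow> ('a \<times> 'a) set \<Rightarrow> real ^ ('a \<times> 'a set)" where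
  "eta N G = (\<chi> i. if i \<in> Upsilon N \<and> snd i = pa G (fst i) then 1 else 0)"

definition family_polytope :: "'a::finite set \<Rightarrow> (real ^ ('a \<times> 'a set)) set" where
  "family_polytope N = convex hull (eta N ` DAG N)"

end

theory Submission
  imports Defs
begin

lemma acyclic_rank:
  fixes f :: "'a \<Rightarrow> nat"
  assumes "\<And>x y. (x,y) \<in> G \<Longrightarrow> f x < f y"
  shows "acyclic G"
proof -
  have "(x,y) \<in> G\<^sup>+ \<Longrightarrow> f x < f y" for x y
    by (induction rule: trancl_induct) (auto dest: assms)
  then show ?thesis unfolding acyclic_def by fastforce
qed

lemma eta_star:
  fixes N :: "'a::finite set"
  assumes "a \<in> N" "B \<noteq> {}" "B \<subseteq> N - {a}"
  shows "eta N (B \<times> {a}) = axis (a,B) 1" "B \<times> {a} \<in> DAG N"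
proof -
  show "eta N (B \<times> {a}) = axis (a,B) 1"
    using assms unfolding eta_def axis_def Upsilon_def pa_def
    by (auto simp: vec_eq_iff)
  show "B \<times> {a} \<in> DAG N"
    unfolding DAG_def using assms
    by (auto intro!: acyclic_rank[where f="\<lambda>x. if x = a then 1 else 0"])
qed

lemma eta_two:
  fixes N :: "'a::finite set"
  assumes "a \<in> N" "c \<in> N" "d \<in> N" "c \<noteq> a" "d \<noteq> a" "d \<noteq> c"
    "C \<noteq> {}" "C \<subseteq> N - {c}"
  shows "eta N (C \<times> {c} \<union> {(d,a)}) = axis (c,C) 1 + axis (a,{d}) 1"
    "C \<times> {c} \<union> {(d,a)} \<in> DAG N"
proof -
  show "eta N (C \<times> {c} \<union> {(d,a)}) = axis (c,C) 1 + axis (a,{d}) 1"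
    using assms unfolding eta_def axis_def Upsilon_def pa_def
    by (auto simp: vec_eq_iff)
  have "acyclic (C \<times> {c} \<union> {(d,a)})"
    by (rule acyclic_rank[where f="\<lambda>x. if x = c then 2 else if x = a then 1 else 0"])
      (use assms in auto)
  then show "C \<times> {c} \<union> {(d,a)} \<in> DAG N"
    unfolding DAG_def using assms by auto
qed

theorem lemma3:
  fixes N :: "'a::finite set" and a :: 'a
  assumes "card N \<ge> 3" and "a \<in> N"
  shows "(\<forall>x \<in> family_polytope N.
            (\<Sum>B\<in>{B. B \<noteq> {} \<and> B \<subseteq> N - {a}}. x $ (a, B)) \<le> 1)
       \<and> {x \<in> family_polytope N.
            (\<Sum>B\<in>{B. B \<noteq> {} \<and> B \<subseteq> N - {a}}. x $ (a, B)) = 1}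
           facet_of family_polytope N"
proof -
  define A where "A = {B. B \<noteq> {} \<and> B \<subseteq> N - {a}}"
  define P where "P = family_polytope N"
  define S where "S = eta N ` DAG N"
  define h :: "real ^ ('a \<times> 'a set)" where "h = (\<Sum>B\<in>A. axis (a,B) 1)"
  have hx: "h \<bullet> x = (\<Sum>B\<in>A. x $ (a, B))" for x
    unfolding h_def by (simp add: inner_sum_left inner_axis')
  have P: "P = convex hull S" unfolding P_def S_def family_polytope_def by simp
  have convP: "convex P" using P by simp
  have Sle: "h \<bullet> x \<le> 1" if "x \<in> S" for x
  proof -
    from that obtain G where x: "x = eta N G" unfolding S_def by auto
    have "(\<Sum>B\<in>A. x $ (a, B)) = (\<Sum>B\<in>A \<inter> {pa G a}. 1)"
      unfolding x eta_def Upsilon_def A_def using \<open>a \<in> N\<close>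
      by (intro sum.mono_neutral_cong_right) auto
    also have "\<dots> \<le> 1" by (cases "pa G a \<in> A") auto
    finally show ?thesis using hx by simp
  qed
  have Ple: "h \<bullet> x \<le> 1" if "x \<in> P" for x
  proof -
    have "P \<subseteq> {x. h \<bullet> x \<le> 1}" unfolding P
      by (rule hull_minimal) (use Sle convex_halfspace_le in auto)
    then show ?thesis using that by auto
  qed
  define F where "F = P \<inter> {x. h \<bullet> x = 1}"
  have Feq: "{x \<in> family_polytope N. (\<Sum>B\<in>A. x $ (a, B)) = 1} = F"
    unfolding F_def P_def hx by auto
  have face: "F face_of P" unfolding F_def
    by (rule face_of_Int_supporting_hyperplane_le[OF convP Ple])
  have SP: "S \<subseteq> P" unfolding P by (rule hull_subset)
  have axA: "axis (a,B) 1 \<in> F" if "B \<in> A" for B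
  proof -
    have "axis (a,B) 1 \<in> S" using eta_star[OF \<open>a \<in> N\<close>, of B] that
      unfolding S_def A_def by (metis (mono_tags, lifting) image_eqI mem_Collect_eq)
    moreover have "h \<bullet> axis (a,B) 1 = 1"
      unfolding hx using that by (simp add: A_def finite_subset axis_def)
    ultimately show ?thesis using SP unfolding F_def by auto
  qed
  have Fne: "F \<noteq> {}"
  proof -
    have "card (N - {a}) \<ge> 2" using assms by (simp add: card_Diff_singleton)
    then obtain d where "d \<in> N - {a}"
      by (metis card.empty ex_in_conv not_numeral_le_zero)
    then have "{d} \<in> A" unfolding A_def by auto
    then show ?thesis using axA by auto
  qed
  have zP: "0 \<in> P"
  proof -
    have "eta N {} = 0" unfolding eta_def pa_def Upsilon_def by (auto simp: vec_eq_iff)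
    moreover have "{} \<in> DAG N" unfolding DAG_def acyclic_def by auto
    ultimately have "0 \<in> S" unfolding S_def by (metis image_eqI)
    then show ?thesis using SP by auto
  qed
  have FP: "F \<noteq> P" using zP unfolding F_def by (metis (mono_tags, lifting) Int_iff inner_zero_right mem_Collect_eq zero_neq_one)
  have lt: "aff_dim F < aff_dim P" by (rule face_of_aff_dim_lt[OF convP face FP])
  have axF: "axis i 1 \<in> span F" if "i \<in> Upsilon N" for i
  proof (cases "fst i = a")
    case True
    then have "snd i \<in> A" using that unfolding A_def Upsilon_def by auto
    then show ?thesis using axA[of "snd i"] True by (metis prod.collapse span_base)
  next
    case False
    obtain c C where i: "i = (c,C)" by fastforce
    have cC: "c \<in> N" "C \<noteq> {}" "C \<subseteq> N - {c}" "c \<noteq> a"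
      using that False unfolding i Upsilon_def by auto
    have "card (N - {a,c}) \<ge> 1" using assms cC
      by (simp add: card_Diff_subset)
    then obtain d where d: "d \<in> N - {a,c}"
      by (metis card.empty ex_in_conv not_one_le_zero)
    have e: "eta N (C \<times> {c} \<union> {(d,a)}) = axis (c,C) 1 + axis (a,{d}) 1"
      "C \<times> {c} \<union> {(d,a)} \<in> DAG N"
      using eta_two[of a N c d C] cC d assms by auto
    have "axis (c,C) 1 + axis (a,{d}) 1 \<in> S" using e unfolding S_def by (metis image_eqI)
    moreover have "h \<bullet> (axis (c,C) 1 + axis (a,{d}) 1) = 1"
    proof -
      have "{d} \<in> A" using d unfolding A_def by auto
      then have "(\<Sum>B\<in>A. (axis (c,C) 1 + axis (a,{d}) 1) $ (a, B) :: real) = (\<Sum>B\<in>A. if B = {d} then 1 else 0)"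
        using cC by (intro sum.cong) (auto simp: axis_def)
      also have "\<dots> = 1" using \<open>{d} \<in> A\<close> by (simp add: A_def)
      finally show ?thesis using hx by simp
    qed
    ultimately have "axis (c,C) 1 + axis (a,{d}) 1 \<in> F" using SP unfolding F_def by auto
    moreover have "{d} \<in> A" using d unfolding A_def by auto
    ultimately have "(axis (c,C) 1 + axis (a,{d}) 1) - axis (a,{d}) 1 \<in> span F"
      using axA by (intro span_diff span_base) auto
    then show ?thesis using i by simp
  qed
  have Psub: "P \<subseteq> span F"
  proof
    fix x assume "x \<in> P"
    have "P \<subseteq> {x. \<forall>i. i \<notin> Upsilon N \<longrightarrow> x $ i = 0}"
      unfolding P
    proof (rule hull_minimal)
      show "S \<subseteq> {x. \<forall>i. i \<notin> Upsilon N \<longrightarrow> x $ i = 0}"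
        unfolding S_def eta_def by auto
      show "convex {x::real^('a \<times> 'a set). \<forall>i. i \<notin> Upsilon N \<longrightarrow> x $ i = 0}"
        unfolding convex_def by auto
    qed
    then have z: "\<And>i. i \<notin> Upsilon N \<Longrightarrow> x $ i = 0" using \<open>x \<in> P\<close> by auto
    have "x = (\<Sum>i\<in>Upsilon N. x $ i *\<^sub>R axis i 1)"
      using z by (auto simp: vec_eq_iff axis_def if_distrib cong: if_cong)
    also have "\<dots> \<in> span F"
      by (intro span_sum span_scale axF)
    finally show "x \<in> span F" .
  qed
  have "aff_dim P = int (dim P)"
    by (rule aff_dim_zero) (rule hull_inc[OF zP])
  also have "dim P \<le> dim F" using dim_subset[OF Psub] by (simp only: dim_span)
  also have "int (dim F) = aff_dim (insert 0 F)"
  proof -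
    have "aff_dim (insert 0 F) = int (dim (insert 0 F))"
      by (rule aff_dim_zero) (simp add: hull_inc)
    also have "dim (insert 0 F) = dim F" by (simp add: dim_insert span_zero)
    finally show ?thesis by simp
  qed
  also have "aff_dim (insert 0 F) \<le> aff_dim F + 1" unfolding aff_dim_insert by simp
  finally have ge: "aff_dim P \<le> aff_dim F + 1" by simp
  have "F facet_of P" unfolding facet_of_def using face Fne lt ge by auto
  then have "{x \<in> family_polytope N. (\<Sum>B\<in>A. x $ (a, B)) = 1} facet_of family_polytope N"
    using Feq unfolding P_def by simp
  moreover have "\<forall>x \<in> family_polytope N. (\<Sum>B\<in>A. x $ (a, B)) \<le> 1"
    using Ple hx unfolding P_def by metis
  ultimately show ?thesis unfolding A_def by blast
qed

end
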